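(* Let $g:\mathbb{R}^n\setminus\{0\}\to\mathbb{R}^n$ denote the gradient $\nabla f$ of a function $f$, let $\tfrac14<\tau<1$ and $\epsilon>0$. Let $\mathbf{x}_0,\mathbf{x}_1,\mathbf{x}_2,\dots$ be nonzero vectors, and define $\mathbf{p}_0=\nabla f(\mathbf{x}_0)$ and, for $k\ge1$, $$\mathbf{p}_k=\nabla f(\mathbf{x}_k)+\beta_{k-1}\mathbf{d}_{k-1},\qquad \mathbf{d}_{k-1}=\mathbf{x}_k-\mathbf{x}_{k-1},\quad \mathbf{y}_{k-1}=\nabla f(\mathbf{x}_k)-\nabla f(\mathbf{x}_{k-1}),$$ where $\beta_{k-1}=\max(0,\tilde\beta_{k-1})$ with $$\tilde\beta_{k-1}=\begin{cases}\left(\tau\,\mathbf{d}_{k-1}\dfrac{\|\mathbf{y}_{k-1}\|^2}{\mathbf{d}_{k-1}^\top\mathbf{y}_{k-1}}-\mathbf{y}_{k-1}\right)^{\!\top}\dfrac{\nabla f(\mathbf{x}_k)}{\mathbf{d}_{k-1}^\top\mathbf{y}_{k-1}} & \text{if } |\mathbf{d}_{k-1}^\top\mathbf{y}_{k-1}|\ge\epsilon\|\mathbf{d}_{k-1}\|\|\mathbf{y}_{k-1}\| \text{ (and } \mathbf{d}_{k-1}^\top\mathbf{y}_{k-1}\neq0),\\ 0&\text{otherwise.}\end{cases}$$ Then for every $k\ge0$, $$\mathbf{p}_k^\top\nabla f(\mathbf{x}_k)\ge\Big(1-\frac{1}{4\tau}\Big)\|\nabla f(\mathbf{x}_k)\|^2,$$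 and there is a constant $M_0>1$, independent of $k$, such that $\|\mathbf{p}_k\|\le M_0\|\nabla f(\mathbf{x}_k)\|$ for all $k$.
   Context: $\|\cdot\|$ is the Euclidean norm. In the paper $f$ is the objective $f(\mathbf{x})=(r-1)!\,\mathcal{A}\mathbf{x}^r/\|\mathbf{x}\|_p^r$ of the $p$-spectral radius problem, but the statement only uses that $\nabla f$ is a vector-valued map. *)

theory Defs
  imports "HOL-Analysis.Analysis"
begin

definition beta_tilde :: "real \<Rightarrow> real \<Rightarrow> 'a::real_inner \<Rightarrow> 'a \<Rightarrow> 'a \<Rightarrow> real" where
  "beta_tilde \<tau> \<epsilon> d y gk =
     (if d \<bullet> y \<noteq> 0 \<and> \<bar>d \<bullet> y\<bar> \<ge> \<epsilon> * norm d * norm y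
      then ((((\<tau> * (norm y)^2 / (d \<bullet> y)) *\<^sub>R d) - y) \<bullet> gk) / (d \<bullet> y)
      else 0)"

definition cg_dir :: "('a::real_inner \<Rightarrow> 'a) \<Rightarrow> real \<Rightarrow> real \<Rightarrow> (nat \<Rightarrow> 'a) \<Rightarrow> nat \<Rightarrow> 'a" where
  "cg_dir g \<tau> \<epsilon> x k =
     (case k of
        0 \<Rightarrow> g (x 0)
      | Suc j \<Rightarrow> g (x (Suc j)) +
          max 0 (beta_tilde \<tau> \<epsilon> (x (Suc j) - x j) (g (x (Suc j)) - g (x j)) (g (x (Suc j))))
            *\<^sub>R (x (Suc j) - x j))"

end

theory Submission
  imports Defs
begin

lemma aux_le:
  fixes a :: real assumes "\<tau> > 0" shows "(1 - 1/(4*\<tau>)) * a^2 \<le> a^2"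
proof -
  have "1/(4*\<tau>) * a^2 \<ge> 0" using assms by simp
  then show ?thesis by (simp add: algebra_simps)
qed

lemma dir_lower:
  fixes d y gk :: "'a::euclidean_space"
  assumes tp: "\<tau> > 0"
  shows "(gk + max 0 (beta_tilde \<tau> \<epsilon> d y gk) *\<^sub>R d) \<bullet> gk \<ge> (1 - 1/(4*\<tau>)) * (norm gk)^2"
proof (cases "beta_tilde \<tau> \<epsilon> d y gk \<le> 0")
  case True
  have "(1 - 1/(4*\<tau>)) * (norm gk)^2 \<le> (norm gk)^2"
    using aux_le[OF tp] by blast
  then show ?thesis using True by (simp add: power2_norm_eq_inner)
next
  case False
  define s where "s = d \<bullet> y"
  have s0: "s \<noteq> 0" using False unfolding beta_tilde_def s_def by (auto split: if_splits)
  have bt: "beta_tilde \<tau> \<epsilon> d y gk = ((\<tau> * (norm y)^2 / s) * (d \<bullet> gk) - y \<bullet> gk) / s"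
    using False unfolding beta_tilde_def s_def
    by (auto split: if_splits simp: inner_diff_left)
  define u where "u = (d \<bullet> gk) / s"
  have eq: "beta_tilde \<tau> \<epsilon> d y gk * (d \<bullet> gk) = \<tau> * (norm y)^2 * u^2 - (y \<bullet> gk) * u"
    unfolding bt u_def using s0 by (simp add: field_simps power2_eq_square)
  have cs: "\<bar>y \<bullet> gk\<bar> \<le> norm y * norm gk" by (rule Cauchy_Schwarz_ineq2)
  have "(y \<bullet> gk) * u \<le> norm y * \<bar>u\<bar> * norm gk"
  proof -
    have "(y \<bullet> gk) * u \<le> \<bar>y \<bullet> gk\<bar> * \<bar>u\<bar>" by (metis abs_ge_self abs_mult)
    also have "\<dots> \<le> norm y * norm gk * \<bar>u\<bar>" using cs by (simp add: mult_right_mono)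
    finally show ?thesis by (simp add: algebra_simps)
  qed
  moreover have "\<tau> * (norm y * \<bar>u\<bar>)^2 - norm y * \<bar>u\<bar> * norm gk \<ge> -((norm gk)^2 / (4*\<tau>))"
  proof -
    have "0 \<le> (2*\<tau>*(norm y * \<bar>u\<bar>) - norm gk)^2" by simp
    then have "0 \<le> (norm gk)^2 + 4*\<tau>*(\<tau> * (norm y * \<bar>u\<bar>)^2 - norm y * \<bar>u\<bar> * norm gk)"
      by (simp add: power2_eq_square algebra_simps)
    then show ?thesis using tp by (simp add: field_simps)
  qed
  ultimately have "beta_tilde \<tau> \<epsilon> d y gk * (d \<bullet> gk) \<ge> -((norm gk)^2 / (4*\<tau>))"
    unfolding eq by (simp add: power_mult_distrib power2_abs)
  moreover have "(gk + max 0 (beta_tilde \<tau> \<epsilon> d y gk) *\<^sub>R d) \<bullet> gk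
      = (norm gk)^2 + beta_tilde \<tau> \<epsilon> d y gk * (d \<bullet> gk)"
    using False by (simp add: inner_add_left power2_norm_eq_inner)
  ultimately show ?thesis using tp by (simp add: field_simps)
qed

lemma dir_upper:
  fixes d y gk :: "'a::euclidean_space"
  assumes tp: "\<tau> > 0" and ep: "\<epsilon> > 0"
  shows "norm (gk + max 0 (beta_tilde \<tau> \<epsilon> d y gk) *\<^sub>R d) \<le> (2 + \<tau>/\<epsilon>^2 + 1/\<epsilon>) * norm gk"
proof (cases "beta_tilde \<tau> \<epsilon> d y gk \<le> 0")
  case True
  have "norm gk \<le> (2 + \<tau>/\<epsilon>^2 + 1/\<epsilon>) * norm gk"
    using tp ep by (simp add: mult_le_cancel_right1)
  then show ?thesis using True by simp
next
  case False
  define s where "s = d \<bullet> y"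
  have s0: "s \<noteq> 0" and sb: "\<epsilon> * norm d * norm y \<le> \<bar>s\<bar>"
    using False unfolding beta_tilde_def s_def by (auto split: if_splits)
  have bt: "beta_tilde \<tau> \<epsilon> d y gk = \<tau> * (norm y)^2 * (d \<bullet> gk) / s^2 - (y \<bullet> gk) / s"
    using False s0 unfolding beta_tilde_def s_def
    by (auto split: if_splits simp: inner_diff_left field_simps power2_eq_square)
  have c1: "\<bar>d \<bullet> gk\<bar> \<le> norm d * norm gk" by (rule Cauchy_Schwarz_ineq2)
  have c2: "\<bar>y \<bullet> gk\<bar> \<le> norm y * norm gk" by (rule Cauchy_Schwarz_ineq2)
  have s2: "s^2 > 0" using s0 by simp
  have dy: "norm d * norm y \<le> \<bar>s\<bar> / \<epsilon>" using sb ep by (simp add: field_simps)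
  have t1: "\<bar>\<tau> * (norm y)^2 * (d \<bullet> gk) / s^2\<bar> * norm d \<le> \<tau> / \<epsilon>^2 * norm gk"
  proof -
    have "\<bar>\<tau> * (norm y)^2 * (d \<bullet> gk) / s^2\<bar> * norm d
        = \<tau> * (norm y)^2 * \<bar>d \<bullet> gk\<bar> * norm d / s^2" using tp by (simp add: abs_mult)
    also have "\<dots> \<le> \<tau> * (norm y)^2 * (norm d * norm gk) * norm d / s^2"
      using c1 tp s2 by (intro divide_right_mono mult_right_mono mult_left_mono) auto
    also have "\<dots> = \<tau> * (norm d * norm y)^2 * norm gk / s^2" by (simp add: power2_eq_square)
    also have "\<dots> \<le> \<tau> * (\<bar>s\<bar>/\<epsilon>)^2 * norm gk / s^2"
      using dy tp s2 by (intro divide_right_mono mult_right_mono mult_left_mono power_mono) auto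
    also have "\<dots> = \<tau> / \<epsilon>^2 * norm gk" using s0 by (simp add: field_simps power2_abs)
    finally show ?thesis .
  qed
  have t2: "\<bar>(y \<bullet> gk) / s\<bar> * norm d \<le> 1 / \<epsilon> * norm gk"
  proof -
    have "\<bar>(y \<bullet> gk) / s\<bar> * norm d = \<bar>y \<bullet> gk\<bar> * norm d / \<bar>s\<bar>" by simp
    also have "\<dots> \<le> (norm y * norm gk) * norm d / \<bar>s\<bar>"
      using c2 by (intro divide_right_mono mult_right_mono) auto
    also have "\<dots> = (norm d * norm y) * norm gk / \<bar>s\<bar>" by simp
    also have "\<dots> \<le> (\<bar>s\<bar>/\<epsilon>) * norm gk / \<bar>s\<bar>"
      using dy by (intro divide_right_mono mult_right_mono) auto
    also have "\<dots> = 1 / \<epsilon> * norm gk" using s0 by simp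
    finally show ?thesis .
  qed
  have "norm (gk + max 0 (beta_tilde \<tau> \<epsilon> d y gk) *\<^sub>R d) \<le> norm gk + \<bar>beta_tilde \<tau> \<epsilon> d y gk\<bar> * norm d"
    using False norm_triangle_ineq[of gk "beta_tilde \<tau> \<epsilon> d y gk *\<^sub>R d"] by simp
  also have "\<bar>beta_tilde \<tau> \<epsilon> d y gk\<bar> * norm d \<le>
      \<bar>\<tau> * (norm y)^2 * (d \<bullet> gk) / s^2\<bar> * norm d + \<bar>(y \<bullet> gk) / s\<bar> * norm d"
    unfolding bt by (metis abs_triangle_ineq4 distrib_right mult_right_mono norm_ge_zero)
  finally have "norm (gk + max 0 (beta_tilde \<tau> \<epsilon> d y gk) *\<^sub>R d) \<le> norm gk +
      (\<bar>\<tau> * (norm y)^2 * (d \<bullet> gk) / s^2\<bar> * norm d + \<bar>(y \<bullet> gk) / s\<bar> * norm d)" by simp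
  moreover have "(2 + \<tau>/\<epsilon>^2 + 1/\<epsilon>) * norm gk = norm gk + norm gk + \<tau> / \<epsilon>^2 * norm gk + 1 / \<epsilon> * norm gk"
    by (simp add: algebra_simps)
  moreover have "norm gk \<ge> 0" by simp
  ultimately show ?thesis using t1 t2 by linarith
qed

theorem lemma3p3:
  fixes g :: "'a::euclidean_space \<Rightarrow> 'a" and x :: "nat \<Rightarrow> 'a" and \<tau> \<epsilon> :: real
  assumes "1/4 < \<tau>" and "\<tau> < 1" and "\<epsilon> > 0"
    and "\<And>k. x k \<noteq> 0"
  shows "(\<forall>k. cg_dir g \<tau> \<epsilon> x k \<bullet> g (x k) \<ge> (1 - 1 / (4 * \<tau>)) * (norm (g (x k)))^2)
       \<and> (\<exists>M0 > 1. \<forall>k. norm (cg_dir g \<tau> \<epsilon> x k) \<le> M0 * norm (g (x k)))"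
proof
  have tp: "\<tau> > 0" using assms(1) by simp
  show "\<forall>k. cg_dir g \<tau> \<epsilon> x k \<bullet> g (x k) \<ge> (1 - 1 / (4 * \<tau>)) * (norm (g (x k)))^2"
  proof
    fix k show "cg_dir g \<tau> \<epsilon> x k \<bullet> g (x k) \<ge> (1 - 1 / (4 * \<tau>)) * (norm (g (x k)))^2"
    proof (cases k)
      case 0
      have "(1 - 1/(4*\<tau>)) * (norm (g (x 0)))^2 \<le> (norm (g (x 0)))^2"
        using aux_le[OF tp] by blast
      then show ?thesis using 0 by (simp add: cg_dir_def power2_norm_eq_inner)
    next
      case (Suc j)
      then show ?thesis unfolding cg_dir_def using dir_lower[OF tp] by simp
    qed
  qed
  show "\<exists>M0 > 1. \<forall>k. norm (cg_dir g \<tau> \<epsilon> x k) \<le> M0 * norm (g (x k))"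
  proof (intro exI conjI allI)
    show "(2 + \<tau>/\<epsilon>^2 + 1/\<epsilon>) > 1" using tp assms(3) by (simp add: add_pos_pos)
    fix k show "norm (cg_dir g \<tau> \<epsilon> x k) \<le> (2 + \<tau>/\<epsilon>^2 + 1/\<epsilon>) * norm (g (x k))"
    proof (cases k)
      case 0
      have "norm (g (x 0)) \<le> (2 + \<tau>/\<epsilon>^2 + 1/\<epsilon>) * norm (g (x 0))"
        using tp assms(3) by (simp add: mult_le_cancel_right1)
      then show ?thesis using 0 by (simp add: cg_dir_def)
    next
      case (Suc j)
      then show ?thesis unfolding cg_dir_def using dir_upper[OF tp assms(3)] by simp
    qed
  qed
qed

end
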